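(* For every positive integer $k$, $$M_{0^k}=\frac{\prod_{i=0}^{k-1}(M_0-i)}{k!}=\frac{(-1)^k}{k!}\prod_{i=1}^k\Big(t+i-\frac12\Big),$$ where $0^k=(0,\dots,0)$ has $k$ entries.
   Context: $\mathbb P$ denotes the positive integers. For $\beta\in\mathbb P^k$, $\phi\binom{0^k}{\beta}\in\mathbb Q[t][z^{-1},z]]$ is the Laurent expansion in $z$ (coefficients in $\mathbb Q[t]$) of the absolutely convergent series $\sum_{0<i_1<\cdots<i_k}e^{(i_1+t)\beta_1z}\cdots e^{(i_k+t)\beta_kz}$, for $t\ge0$ and $\mathrm{Re}(z)<0$. Let $P$ be the polar-part projection, $P(\sum_{n\ge m}a_nz^n)=\sum_{n<0}a_nz^n$. Set $\phi_-(\emptyset)=1$. For $k\ge1$ let $$E=\phi\tbinom{0^k}{\beta}+\sum_{i=1}^{k-1}\phi\tbinom{0^i}{\beta_1..\beta_i}\phi_-\tbinom{0^{k-i}}{\beta_{i+1}..\beta_k}.$$ Then $\phi_-\binom{0^k}{\beta}=-P(E)$, $\phi_+\binom{0^k}{\beta}=(\mathrm{id}-P)(E)$, and $Z\binom{0^k}{\beta}=\phi_+\binom{0^k}{\beta}|_{z=0}\in\mathbb Q[t]$. The renormalized monomial quasisymmetric function is $M_{0^k}:=Z\binom{0^k}{\delta,\dots,\delta}$ for $\delta\in\mathbb P$; this does not depend on $\delta$. Here $M_0$ means $M_{0^1}$. *)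

theory Defs
  imports "HOL-Analysis.Analysis" "HOL-Computational_Algebra.Formal_Laurent_Series"
begin

text \<open>Index tuples 0 < i_1 < ... < i_k, represented as strictly increasing lists of length k.\<close>
definition idx_tuples :: "nat \<Rightarrow> nat list set" where
  "idx_tuples k = {is. length is = k \<and> sorted_wrt (<) is \<and> (\<forall>x\<in>set is. 0 < x)}"

text \<open>The function sum_{0<i_1<...<i_k} prod_j exp((i_j+t) beta_j z), for fixed real t,
  as a function of complex z (absolutely convergent for t \<ge> 0, Re z < 0).\<close>
definition phi_fun :: "real \<Rightarrow> nat list \<Rightarrow> complex \<Rightarrow> complex" where
  "phi_fun t \<beta> z = (\<Sum>\<^sub>\<infinity> is \<in> idx_tuples (length \<beta>).
      \<Prod>j<length \<beta>. exp (complex_of_real (real (is ! j) + t) * of_nat (\<beta> ! j) * z))"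

text \<open>F is the Laurent expansion (at z = 0) of f on the region Re z < 0.\<close>
definition is_laurent_exp :: "complex fls \<Rightarrow> (complex \<Rightarrow> complex) \<Rightarrow> bool" where
  "is_laurent_exp F f \<longleftrightarrow> (\<exists>r>0. \<forall>z. 0 < norm z \<and> norm z < r \<and> Re z < 0 \<longrightarrow>
      (\<lambda>n::nat. fls_nth F (fls_subdegree F + int n) * z powi (fls_subdegree F + int n)) sums f z)"

definition phi :: "real \<Rightarrow> nat list \<Rightarrow> complex fls" where
  "phi t \<beta> = (THE F. is_laurent_exp F (phi_fun t \<beta>))"

definition polar :: "complex fls \<Rightarrow> complex fls" where
  "polar F = F - fps_to_fls (fls_regpart F)"

function phi_minus :: "real \<Rightarrow> nat list \<Rightarrow> complex fls" where
  "phi_minus t \<beta> = (if \<beta> = [] then 1 else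
     - polar (phi t \<beta> + (\<Sum>i\<in>{1..<length \<beta>}. phi t (take i \<beta>) * phi_minus t (drop i \<beta>))))"
  by auto
termination
  by (relation "Wellfounded.measure (\<lambda>(t, \<beta>). length \<beta>)") auto

definition E_series :: "real \<Rightarrow> nat list \<Rightarrow> complex fls" where
  "E_series t \<beta> = phi t \<beta> + (\<Sum>i\<in>{1..<length \<beta>}. phi t (take i \<beta>) * phi_minus t (drop i \<beta>))"

definition phi_plus :: "real \<Rightarrow> nat list \<Rightarrow> complex fls" where
  "phi_plus t \<beta> = E_series t \<beta> - polar (E_series t \<beta>)"

definition Zren :: "real \<Rightarrow> nat list \<Rightarrow> complex" where
  "Zren t \<beta> = fls_nth (phi_plus t \<beta>) 0"

text \<open>Renormalized M_{0^k} at t, computed with the letter delta.\<close>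
definition M0k :: "nat \<Rightarrow> nat \<Rightarrow> real \<Rightarrow> complex" where
  "M0k \<delta> k t = Zren t (replicate k \<delta>)"

end

theory Submission
  imports Defs "HOL-Complex_Analysis.Complex_Analysis"
begin

definition shiftc :: "nat \<times> nat list \<Rightarrow> nat list" where
  "shiftc p = fst p # map (\<lambda>i. i + fst p) (snd p)"

lemma idx_tuples_0: "idx_tuples 0 = {[]}"
  by (auto simp: idx_tuples_def)

lemma idx_tuples_Suc: "idx_tuples (Suc k) = shiftc ` ({1..} \<times> idx_tuples k)"
proof
  show "shiftc ` ({1..} \<times> idx_tuples k) \<subseteq> idx_tuples (Suc k)"
    by (auto simp: shiftc_def idx_tuples_def sorted_wrt_map)
next
  show "idx_tuples (Suc k) \<subseteq> shiftc ` ({1..} \<times> idx_tuples k)"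
  proof
    fix xs assume "xs \<in> idx_tuples (Suc k)"
    then obtain a ys where xs: "xs = a # ys" and a: "a \<ge> 1" and ys: "length ys = k"
       "sorted_wrt (<) ys" "\<forall>y\<in>set ys. a < y"
      by (cases xs) (auto simp: idx_tuples_def)
    define zs where "zs = map (\<lambda>i. i - a) ys"
    have "zs \<in> idx_tuples k" using ys
      by (auto simp: zs_def idx_tuples_def sorted_wrt_map intro!: sorted_wrt_mono_rel[of ys "(<)"])
    moreover have "map (\<lambda>i. i + a) zs = ys" using ys(3)
      by (auto simp: zs_def intro!: map_idI)
    ultimately show "xs \<in> shiftc ` ({1..} \<times> idx_tuples k)"
      using a xs by (auto simp: shiftc_def image_iff intro!: bexI[of _ "(a, zs)"])
  qed
qed

lemma inj_shiftc: "inj shiftc"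
  by (auto simp: inj_def shiftc_def inj_map_eq_map[of "\<lambda>i. i + _", OF inj_onI] prod_eq_iff)

lemma sum_list_shiftc: "sum_list (shiftc (a, is)) = Suc (length is) * a + sum_list is"
  by (induction "is") (auto simp: shiftc_def)

lemma tuple_sum:
  fixes q :: complex
  assumes "norm q < 1"
  shows "((\<lambda>is. q ^ sum_list is) has_sum (\<Prod>j\<in>{1..k}. q^j/(1-q^j))) (idx_tuples k)"
  using assms
proof (induction k arbitrary: q)
  case 0
  then show ?case by (auto simp: idx_tuples_0 intro!: has_sum_finiteI)
next
  case (Suc k)
  define T where "T = (\<Prod>j\<in>{1..k}. q^j/(1-q^j))"
  define z where "z = q ^ Suc k"
  have nq: "norm q < 1" by fact
  have nz: "norm z < 1" unfolding z_def norm_power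
    using nq by (metis norm_ge_zero power_Suc power_less_one_iff zero_less_Suc)
  have IH: "((\<lambda>is. q ^ sum_list is) has_sum T) (idx_tuples k)"
    using Suc.IH[OF nq] by (simp add: T_def)
  from Suc.IH[of "complex_of_real (norm q)"] nq have
    "(\<lambda>is. complex_of_real (norm q) ^ sum_list is) summable_on (idx_tuples k)"
    by (auto dest: has_sum_imp_summable)
  hence "(\<lambda>is. norm (complex_of_real (norm q) ^ sum_list is)) summable_on (idx_tuples k)"
    using summable_on_iff_abs_summable_on_complex by metis
  hence nsum: "(\<lambda>is. norm (q ^ sum_list is)) summable_on (idx_tuples k)"
    by (simp add: norm_power)
  define f where "f = (\<lambda>p::nat \<times> nat list. z ^ fst p * q ^ sum_list (snd p))"
  have fib: "((\<lambda>is. f (a, is)) has_sum (z ^ a * T)) (idx_tuples k)" for a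
    unfolding f_def using has_sum_cmult_right[OF IH, of "z^a"] by simp
  have outer: "((\<lambda>a. z ^ a * T) has_sum (z / (1 - z) * T)) {1..}"
    using has_sum_cmult_left[OF has_sum_geometric_from_1[OF nz]] by simp
  have "(\<lambda>x. norm (f x)) summable_on Sigma {1..} (\<lambda>_. idx_tuples k)"
  proof (subst Infinite_Sum.abs_summable_on_Sigma_iff, intro conjI ballI)
    fix a :: nat
    show "(\<lambda>y. norm (f (a, y))) summable_on idx_tuples k"
      using summable_on_cmult_right[OF nsum, of "norm z ^ a"]
      by (simp add: f_def norm_mult norm_power)
  next
    define C where "C = infsum (\<lambda>is. norm (q ^ sum_list is)) (idx_tuples k)"
    have eq: "(\<lambda>a. infsum (\<lambda>y. norm (f (a, y))) (idx_tuples k)) = (\<lambda>a. norm z ^ a * C)"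
      by (auto simp: f_def norm_mult norm_power C_def infsum_cmult_right')
    have "(\<lambda>a. norm z ^ a * C) summable_on {1..}"
      using has_sum_geometric_from_1[of "norm z"] nz
      by (intro summable_on_cmult_left) (auto dest: has_sum_imp_summable)
    moreover have "C \<ge> 0" unfolding C_def by (intro infsum_nonneg) auto
    ultimately show "(\<lambda>x. norm (infsum (\<lambda>y. norm (f (x, y))) (idx_tuples k))) summable_on {1..}"
    proof -
      have "norm (infsum (\<lambda>y. norm (f (x, y))) (idx_tuples k)) = norm z ^ x * C" for x
        using fun_cong[OF eq, of x] \<open>C \<ge> 0\<close> by simp
      thus ?thesis using \<open>(\<lambda>a. norm z ^ a * C) summable_on {1..}\<close> by simp
    qed
  qed
  hence summ: "f summable_on Sigma {1..} (\<lambda>_. idx_tuples k)"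
    using summable_on_iff_abs_summable_on_complex by metis
  have "(f has_sum (z / (1 - z) * T)) ({1..} \<times> idx_tuples k)"
    by (rule has_sum_SigmaI[OF fib outer summ])
  moreover have "f p = ((\<lambda>is. q ^ sum_list is) \<circ> shiftc) p" if "p \<in> {1..} \<times> idx_tuples k" for p
    using that by (auto simp: f_def z_def sum_list_shiftc power_add power_mult power_mult_distrib idx_tuples_def)
  ultimately have "(((\<lambda>is. q ^ sum_list is) \<circ> shiftc) has_sum (z / (1 - z) * T)) ({1..} \<times> idx_tuples k)"
    using has_sum_cong by blast
  hence "((\<lambda>is. q ^ sum_list is) has_sum (z / (1 - z) * T)) (shiftc ` ({1..} \<times> idx_tuples k))"
    using has_sum_reindex[of shiftc] inj_shiftc by (metis inj_on_subset subset_UNIV)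
  moreover have "(\<Prod>j\<in>{1..Suc k}. q^j/(1-q^j)) = z / (1 - z) * T"
    by (simp add: T_def z_def prod.nat_ivl_Suc')
  ultimately show ?case by (simp add: idx_tuples_Suc)
qed

lemma exp_shift_lemma:
  "exp (complex_of_real (real n + t) * d * z) = exp (of_real t * d * z) * exp (d * z) ^ n"
proof -
  have "complex_of_real (real n + t) * d * z = of_real t * d * z + of_nat n * (d * z)"
    by (simp add: algebra_simps)
  thus ?thesis by (simp add: exp_add exp_of_nat_mult)
qed

lemma phi_fun_closed:
  assumes "Re z < 0" "\<delta> \<ge> 1"
  shows "phi_fun t (replicate k \<delta>) z =
    (\<Prod>j\<in>{1..k}. exp (of_real t * of_nat \<delta> * z) * exp (of_nat \<delta> * z) ^ j / (1 - exp (of_nat \<delta> * z) ^ j))"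
proof -
  define q where "q = exp (of_nat \<delta> * z)"
  define u where "u = exp (of_real t * of_nat \<delta> * z)"
  have nq: "norm q < 1" using assms by (simp add: q_def mult_pos_neg)
  have trm: "(\<Prod>j<length (replicate k \<delta>). exp (complex_of_real (real (xs ! j) + t) * of_nat (replicate k \<delta> ! j) * z))
      = u ^ k * q ^ sum_list xs" if "xs \<in> idx_tuples k" for xs
  proof -
    have len: "length xs = k" using that by (simp add: idx_tuples_def)
    have "(\<Prod>j<length (replicate k \<delta>). exp (complex_of_real (real (xs ! j) + t) * of_nat (replicate k \<delta> ! j) * z))
        = (\<Prod>j<k. u * q ^ (xs ! j))"
      unfolding length_replicate by (intro prod.cong refl, simp only: lessThan_iff nth_replicate u_def q_def exp_shift_lemma)
    also have "\<dots> = u ^ k * q ^ (\<Sum>j<k. xs ! j)"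
      by (simp add: prod.distrib power_sum)
    also have "(\<Sum>j<k. xs ! j) = sum_list xs"
      using len by (simp add: sum_list_sum_nth atLeast0LessThan)
    finally show ?thesis .
  qed
  have "((\<lambda>xs. u ^ k * q ^ sum_list xs) has_sum (u ^ k * (\<Prod>j\<in>{1..k}. q^j/(1-q^j)))) (idx_tuples k)"
    by (intro has_sum_cmult_right tuple_sum nq)
  hence "phi_fun t (replicate k \<delta>) z = u ^ k * (\<Prod>j\<in>{1..k}. q^j/(1-q^j))"
    unfolding phi_fun_def length_replicate
    by (subst infsum_cong[OF trm[unfolded length_replicate]]) (auto intro: infsumI)
  also have "\<dots> = (\<Prod>j\<in>{1..k}. u) * (\<Prod>j\<in>{1..k}. q^j/(1-q^j))"
    by simp
  also have "\<dots> = (\<Prod>j\<in>{1..k}. u * (q ^ j / (1 - q ^ j)))"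
    by (simp only: prod.distrib)
  also have "\<dots> = (\<Prod>j\<in>{1..k}. u * q ^ j / (1 - q ^ j))"
    by simp
  finally show ?thesis by (simp add: u_def q_def)
qed

lemma is_laurent_exp_from_expansion:
  fixes f g :: "complex \<Rightarrow> complex" and F :: "complex fls"
  assumes g: "g has_laurent_expansion F" and fg: "\<And>z. Re z < 0 \<Longrightarrow> f z = g z"
  shows "is_laurent_exp F f"
proof -
  from g have R: "fls_conv_radius F > 0" and ev: "eventually (\<lambda>z. eval_fls F z = g z) (at 0)"
    by (auto simp: has_laurent_expansion_def)
  obtain r0 where r0: "0 < r0" "ereal r0 < fls_conv_radius F"
    using ereal_dense2[OF R] by (auto simp: zero_ereal_def)
  from ev obtain d where d: "d > 0" "\<And>z. z \<noteq> 0 \<Longrightarrow> dist z 0 < d \<Longrightarrow> eval_fls F z = g z"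
    unfolding eventually_at by auto
  show ?thesis unfolding is_laurent_exp_def
  proof (intro exI[of _ "min d r0"] conjI allI impI)
    show "0 < min d r0" using d r0 by simp
    fix z :: complex assume z: "0 < norm z \<and> norm z < min d r0 \<and> Re z < 0"
    have "ereal (norm z) < ereal r0" using z by simp
    hence "ereal (norm z) < fls_conv_radius F" using r0(2) by (rule less_trans)
    hence "(\<lambda>k. fls_nth F (int k + fls_subdegree F) * z powi (int k + fls_subdegree F)) sums eval_fls F z"
      using z by (intro sums_eval_fls) auto
    also have "eval_fls F z = f z" using z d fg[of z] by auto
    finally show "(\<lambda>n. fls_nth F (fls_subdegree F + int n) * z powi (fls_subdegree F + int n)) sums f z"
      by (simp add: add.commute)
  qed
qed

lemma is_laurent_exp_radius:
  fixes f :: "complex \<Rightarrow> complex" and F :: "complex fls"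
  assumes "is_laurent_exp F f"
  obtains r where "r > 0" "ereal r \<le> fls_conv_radius F"
    "\<And>z. 0 < norm z \<Longrightarrow> norm z < r \<Longrightarrow> Re z < 0 \<Longrightarrow> eval_fls F z = f z"
proof -
  from assms obtain r where r: "r > 0" and S: "\<And>z. 0 < norm z \<and> norm z < r \<and> Re z < 0 \<Longrightarrow>
      (\<lambda>n::nat. fls_nth F (fls_subdegree F + int n) * z powi (fls_subdegree F + int n)) sums f z"
    unfolding is_laurent_exp_def by blast
  define z0 where "z0 = - complex_of_real (r / 2)"
  have nz0: "norm z0 = r / 2" using r by (simp add: z0_def)
  have "summable (\<lambda>n::nat. fls_nth F (fls_subdegree F + int n) * z0 powi (fls_subdegree F + int n))"
    using S[of z0] r nz0 by (auto simp: z0_def sums_iff)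
  hence "summable (\<lambda>n::nat. z0 powi (- fls_subdegree F) * (fls_nth F (fls_subdegree F + int n) * z0 powi (fls_subdegree F + int n)))"
    by (rule summable_mult)
  also have "(\<lambda>n::nat. z0 powi (- fls_subdegree F) * (fls_nth F (fls_subdegree F + int n) * z0 powi (fls_subdegree F + int n)))
     = (\<lambda>n. fls_base_factor_to_fps F $ n * z0 ^ n)"
  proof
    fix n :: nat
    have z0: "z0 \<noteq> 0" using r nz0 by auto
    have pA: "z0 powi (fls_subdegree F + int n) = z0 powi (fls_subdegree F) * z0 ^ n"
      using z0 by (simp add: power_int_add)
    have "z0 powi (- fls_subdegree F) * z0 powi (fls_subdegree F) = 1"
      using z0 by (simp add: power_int_minus)
    have "z0 powi (- fls_subdegree F) * (fls_nth F (fls_subdegree F + int n) * z0 powi (fls_subdegree F + int n))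
      = fls_nth F (fls_subdegree F + int n) * (z0 powi (- fls_subdegree F) * z0 powi (fls_subdegree F)) * z0 ^ n"
      by (simp only: pA mult_ac)
    also have "\<dots> = fls_base_factor_to_fps F $ n * z0 ^ n"
      using \<open>z0 powi (- fls_subdegree F) * z0 powi (fls_subdegree F) = 1\<close>
      by (simp add: fls_base_factor_to_fps_nth add.commute)
    finally show "z0 powi (- fls_subdegree F) * (fls_nth F (fls_subdegree F + int n) * z0 powi (fls_subdegree F + int n))
      = fls_base_factor_to_fps F $ n * z0 ^ n" .
  qed
  finally have "conv_radius (fps_nth (fls_base_factor_to_fps F)) \<ge> norm z0"
    by (rule conv_radius_geI)
  hence rad: "ereal (r/2) \<le> fls_conv_radius F"
    by (simp add: fls_conv_radius_altdef fps_conv_radius_def nz0)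
  show ?thesis
  proof (rule that[of "r/2"])
    show "0 < r/2" using r by simp
    show "ereal (r/2) \<le> fls_conv_radius F" by (rule rad)
    fix z :: complex assume z: "0 < norm z" "norm z < r/2" "Re z < 0"
    have "ereal (norm z) < ereal (r/2)" using z by simp
    hence "ereal (norm z) < fls_conv_radius F" using rad by (rule less_le_trans)
    hence "(\<lambda>k. fls_nth F (int k + fls_subdegree F) * z powi (int k + fls_subdegree F)) sums eval_fls F z"
      using z by (intro sums_eval_fls) auto
    moreover have "(\<lambda>k. fls_nth F (int k + fls_subdegree F) * z powi (int k + fls_subdegree F)) sums f z"
      using S[of z] z by (simp add: add.commute)
    ultimately show "eval_fls F z = f z" by (rule sums_unique2)
  qed
qed

lemma is_laurent_exp_unique:
  fixes f :: "complex \<Rightarrow> complex" and F G :: "complex fls"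
  assumes "is_laurent_exp F f" "is_laurent_exp G f"
  shows "F = G"
proof -
  obtain r1 where r1: "r1 > 0" "ereal r1 \<le> fls_conv_radius F"
    "\<And>z. 0 < norm z \<Longrightarrow> norm z < r1 \<Longrightarrow> Re z < 0 \<Longrightarrow> eval_fls F z = f z"
    using is_laurent_exp_radius[OF assms(1)] by blast
  obtain r2 where r2: "r2 > 0" "ereal r2 \<le> fls_conv_radius G"
    "\<And>z. 0 < norm z \<Longrightarrow> norm z < r2 \<Longrightarrow> Re z < 0 \<Longrightarrow> eval_fls G z = f z"
    using is_laurent_exp_radius[OF assms(2)] by blast
  define \<rho> where "\<rho> = min r1 r2"
  have rho: "\<rho> > 0" using r1 r2 by (simp add: \<rho>_def)
  have R: "fls_conv_radius (F - G) > 0"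
  proof -
    have "0 < ereal \<rho>" using rho by simp
    also have "ereal \<rho> \<le> min (fls_conv_radius F) (fls_conv_radius G)"
    proof (intro min.boundedI)
      have "ereal \<rho> \<le> ereal r1" "ereal \<rho> \<le> ereal r2" by (auto simp: \<rho>_def)
      thus "ereal \<rho> \<le> fls_conv_radius F" "ereal \<rho> \<le> fls_conv_radius G"
        using r1(2) r2(2) order_trans by blast+
    qed
    also have "\<dots> \<le> fls_conv_radius (F - G)" by (rule fls_conv_radius_diff)
    finally show ?thesis .
  qed
  have zero: "eval_fls (F - G) z = 0" if "0 < norm z" "norm z < \<rho>" "Re z < 0" for z
  proof -
    have "ereal (norm z) < ereal r1" "ereal (norm z) < ereal r2" using that by (auto simp: \<rho>_def)
    hence "ereal (norm z) < fls_conv_radius F" "ereal (norm z) < fls_conv_radius G"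
      using r1(2) r2(2) less_le_trans by blast+
    hence "eval_fls (F - G) z = eval_fls F z - eval_fls G z"
      using that by (intro eval_fls_diff) auto
    also have "\<dots> = 0" using that r1 r2 by (simp add: \<rho>_def)
    finally show ?thesis .
  qed
  have H: "(\<lambda>w. eval_fls (F - G) (0 + w)) has_laurent_expansion (F - G)"
    using eval_fls_has_laurent_expansion[OF R] by simp
  have "frequently (\<lambda>z. eval_fls (F - G) z = 0) (at 0)"
    unfolding frequently_def eventually_at
  proof
    assume "\<exists>d>0. \<forall>x\<in>UNIV. x \<noteq> 0 \<and> dist x 0 < d \<longrightarrow> \<not> eval_fls (F - G) x = 0"
    then obtain d where d: "d > 0" "\<And>x. x \<noteq> 0 \<Longrightarrow> dist x 0 < d \<Longrightarrow> eval_fls (F - G) x \<noteq> 0"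
      by auto
    define x where "x = - complex_of_real (min d \<rho> / 2)"
    have "norm x = min d \<rho> / 2" using d rho by (simp add: x_def)
    hence "x \<noteq> 0" "dist x 0 < d" "0 < norm x" "norm x < \<rho>" "Re x < 0" using d rho by (auto simp: x_def)
    thus False using d zero by blast
  qed
  hence "F - G = 0" using has_laurent_expansion_frequently_zero_iff[OF H] by simp
  thus ?thesis by simp
qed

lemma Lcoeff:
  fixes b c :: complex
  assumes c: "c \<noteq> 0"
  defines "Lf \<equiv> fps_to_fls (fps_exp b) / fps_to_fls (1 - fps_exp c)"
  shows "\<And>m. m < -1 \<Longrightarrow> fls_nth Lf m = 0" and "fls_nth Lf 0 = 1/2 - b/c"
proof -
  define D where "D = Abs_fps (\<lambda>k. - (c ^ Suc k / fact (Suc k)))"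
  have D0: "fps_nth D 0 = - c" and D1: "fps_nth D 1 = - (c^2) / 2"
    by (simp_all add: D_def power2_eq_square)
  have XD: "1 - fps_exp c = fps_X * D"
  proof (rule fps_ext)
    fix n show "fps_nth (1 - fps_exp c) n = fps_nth (fps_X * D) n"
      by (cases n) (simp_all add: D_def fps_exp_nth del: fact_Suc)
  qed
  define F where "F = fps_exp b * inverse D"
  have FD: "F * D = fps_exp b"
    using c D0 by (simp add: F_def mult.assoc inverse_mult_eq_1)
  have F0: "fps_nth F 0 = - 1 / c"
  proof -
    have "fps_nth F 0 * (- c) = 1" using arg_cong[OF FD, of "\<lambda>f. fps_nth f 0"] D0 by simp
    thus ?thesis using c by (simp add: field_simps) (metis add.inverse_inverse)
  qed
  have F1: "fps_nth F 1 = 1/2 - b/c"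
  proof -
    have "fps_nth (F * D) 1 = b" using FD by simp
    hence "fps_nth F 0 * fps_nth D 1 + fps_nth F 1 * fps_nth D 0 = b"
      by (simp add: fps_mult_nth)
    hence "(- 1 / c) * (- (c^2) / 2) + fps_nth F 1 * (- c) = b" by (simp only: F0 D0 D1)
    thus ?thesis using c by (simp add: field_simps power2_eq_square)
  qed
  have nz: "fps_to_fls (1 - fps_exp c) \<noteq> 0"
  proof -
    have "D \<noteq> 0" using c D0 by auto
    thus ?thesis by (simp add: XD)
  qed
  have "fls_shift 1 (fps_to_fls F) * fps_to_fls (1 - fps_exp c) = fps_to_fls (fps_exp b)"
  proof -
    have "fls_shift 1 (fps_to_fls F) * fps_to_fls (1 - fps_exp c)
        = fls_shift 1 (fps_to_fls F) * (fls_X * fps_to_fls D)"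
      by (simp add: XD fls_times_fps_to_fls)
    also have "\<dots> = fls_shift 1 (fls_shift (-1) (fps_to_fls F * fps_to_fls D))"
      by (simp add: fls_shifted_times_simps fls_X_times_conv_shift mult_ac)
    also have "\<dots> = fps_to_fls (fps_exp b)"
      by (simp add: FD flip: fls_times_fps_to_fls)
    finally show ?thesis .
  qed
  hence LF: "Lf = fls_shift 1 (fps_to_fls F)"
    using nz unfolding Lf_def by (simp add: field_simps)
  show "\<And>m. m < -1 \<Longrightarrow> fls_nth Lf m = 0" by (simp add: LF)
  show "fls_nth Lf 0 = 1/2 - b/c" using F1 by (simp add: LF)
qed

locale newton =
  fixes q u :: "'a::field_char_0"
  assumes qn: "\<And>m. m \<ge> 1 \<Longrightarrow> q ^ m \<noteq> 1"
begin

definition a :: "nat \<Rightarrow> 'a" where "a k = (\<Prod>j\<in>{1..k}. u * q^j / (1 - q^j))"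
definition L :: "nat \<Rightarrow> 'a" where "L n = u^n * q^n / (1 - q^n)"

lemma a_0 [simp]: "a 0 = 1" by (simp add: a_def)

lemma a_Suc: "a (Suc k) = u * q ^ Suc k / (1 - q ^ Suc k) * a k"
  by (simp add: a_def prod.nat_ivl_Suc')

lemma a_rec: "a (Suc k) * (1 - q ^ Suc k) = u * q ^ Suc k * a k"
proof -
  have "1 - q ^ Suc k \<noteq> 0" using qn[of "Suc k"] by auto
  thus ?thesis by (simp add: a_Suc field_simps)
qed

lemma L_rec: "n \<ge> 1 \<Longrightarrow> L n * (1 - q ^ n) = (u * q) ^ n"
proof -
  assume "n \<ge> 1"
  hence "1 - q ^ n \<noteq> 0" using qn[of n] by auto
  thus ?thesis by (simp add: L_def field_simps power_mult_distrib)
qed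

lemma S_sum: "(\<Sum>n\<le>k. (-1)^n * (u*q)^(n+1) * a (k-n)) = u * q^(k+1) * a k"
proof (induction k)
  case 0 then show ?case by simp
next
  case (Suc k)
  have "(\<Sum>n\<le>Suc k. (-1)^n * (u*q)^(n+1) * a (Suc k-n))
      = (u*q) * a (Suc k) + (\<Sum>n\<le>k. (-1)^(Suc n) * (u*q)^(Suc n+1) * a (Suc k - Suc n))"
    by (subst sum.atMost_Suc_shift) simp
  also have "(\<Sum>n\<le>k. (-1)^(Suc n) * (u*q)^(Suc n+1) * a (Suc k - Suc n))
      = - (u*q) * (\<Sum>n\<le>k. (-1)^n * (u*q)^(n+1) * a (k-n))"
    by (simp add: sum_distrib_left mult_ac)
  also have "\<dots> = - (u*q) * (u * q^(k+1) * a k)" by (simp only: Suc.IH)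
  also have "u * q^(k+1) * a k = a (Suc k) * (1 - q ^ Suc k)"
    using a_rec[of k] by simp
  finally show ?case by (simp add: algebra_simps)
qed

lemma L_split: "n \<le> K \<Longrightarrow> L (n+1) * (1 - q^(K+1)) = (u*q)^(n+1) + q^(n+1) * (L (n+1) * (1 - q^(K-n)))"
proof -
  assume nK: "n \<le> K"
  have "L (n+1) * (1 - q^(K+1)) = L (n+1) * (1 - q^(n+1)) + q^(n+1) * (L (n+1) * (1 - q^(K-n)))"
  proof -
    have e: "q^(K+1) = q^(n+1) * q^(K-n)" using nK by (simp flip: power_add)
    show ?thesis unfolding e by (simp add: algebra_simps)
  qed
  also have "L (n+1) * (1 - q^(n+1)) = (u*q)^(n+1)" by (rule L_rec) simp
  finally show ?thesis .
qed

theorem newton: "of_nat (Suc k) * a (Suc k) = (\<Sum>n\<le>k. (-1)^n * L (n+1) * a (k-n))"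
proof (induction k)
  case 0
  show ?case using L_rec[of 1] a_rec[of 0] qn[of 1]
    by (simp add: a_Suc L_def)
next
  case (Suc k)
  define K where "K = Suc k"
  have nz: "1 - q^(K+1) \<noteq> 0" using qn[of "K+1"] by auto
  have "(\<Sum>n\<le>K. (-1)^n * L (n+1) * a (K-n)) * (1 - q^(K+1))
      = (\<Sum>n\<le>K. (-1)^n * (L (n+1) * (1 - q^(K+1))) * a (K-n))"
    unfolding sum_distrib_right by (intro sum.cong refl) (simp add: mult_ac)
  also have "\<dots> = (\<Sum>n\<le>K. (-1)^n * ((u*q)^(n+1) + q^(n+1) * (L (n+1) * (1 - q^(K-n)))) * a (K-n))"
  proof (intro sum.cong refl)
    fix n assume "n \<in> {..K}" hence nK: "n \<le> K" by simp
    show "(-1)^n * (L (n+1) * (1 - q^(K+1))) * a (K-n) = (-1)^n * ((u*q)^(n+1) + q^(n+1) * (L (n+1) * (1 - q^(K-n)))) * a (K-n)"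
      by (simp only: L_split[OF nK])
  qed
  also have "\<dots> = (\<Sum>n\<le>K. (-1)^n * (u*q)^(n+1) * a (K-n))
       + (\<Sum>n\<le>K. (-1)^n * q^(n+1) * L (n+1) * ((1 - q^(K-n)) * a (K-n)))"
    unfolding sum.distrib[symmetric] by (intro sum.cong refl) (simp add: algebra_simps)
  also have "(\<Sum>n\<le>K. (-1)^n * (u*q)^(n+1) * a (K-n)) = u * q^(K+1) * a K"
    by (rule S_sum)
  also have "(\<Sum>n\<le>K. (-1)^n * q^(n+1) * L (n+1) * ((1 - q^(K-n)) * a (K-n)))
      = (\<Sum>n\<le>k. (-1)^n * q^(n+1) * L (n+1) * ((1 - q^(K-n)) * a (K-n)))"
    by (simp add: K_def)
  also have "\<dots> = (\<Sum>n\<le>k. u * q^(K+1) * ((-1)^n * L (n+1) * a (k-n)))"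
  proof (intro sum.cong refl)
    fix n assume "n \<in> {..k}"
    hence nk: "n \<le> k" by simp
    have KS: "K - n = Suc (k - n)" using nk by (simp add: K_def Suc_diff_le)
    have e1: "(1 - q^(K-n)) * a (K-n) = u * q ^ Suc (k-n) * a (k-n)"
      unfolding KS using a_rec[of "k-n"] by (simp add: mult.commute)
    have e2: "q^(n+1) * q ^ Suc (k-n) = q^(K+1)"
      using nk by (simp add: K_def flip: power_add)
    show "(-1)^n * q^(n+1) * L (n+1) * ((1 - q^(K-n)) * a (K-n)) = u * q^(K+1) * ((-1)^n * L (n+1) * a (k-n))"
      unfolding e1 e2[symmetric] by (simp only: mult_ac)
  qed
  also have "\<dots> = u * q^(K+1) * (of_nat K * a K)"
    by (simp only: sum_distrib_left[symmetric] Suc.IH[symmetric] K_def)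
  finally have "(\<Sum>n\<le>K. (-1)^n * L (n+1) * a (K-n)) * (1 - q^(K+1)) = of_nat (Suc K) * (u * q^(K+1) * a K)"
    by (simp add: algebra_simps)
  also have "u * q^(K+1) * a K = a (Suc K) * (1 - q^(K+1))"
    using a_rec[of K] by simp
  finally have "(\<Sum>n\<le>K. (-1)^n * L (n+1) * a (K-n)) = of_nat (Suc K) * a (Suc K)"
    using nz by (metis (no_types, lifting) mult.assoc mult_cancel_right)
  thus ?case by (simp add: K_def)
qed

end

lemma polar_nth: "fls_nth (polar F) m = (if m < 0 then fls_nth F m else 0)"
  by (simp add: polar_def)

definition reg :: "complex fls \<Rightarrow> bool" where "reg F \<longleftrightarrow> (\<forall>m<0. fls_nth F m = 0)"
definition pol :: "complex fls \<Rightarrow> bool" where "pol F \<longleftrightarrow> (\<forall>m\<ge>0. fls_nth F m = 0)"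
definition p1 :: "complex fls \<Rightarrow> bool" where "p1 F \<longleftrightarrow> (\<forall>m\<ge>1. fls_nth F m = 0)"

lemma polar_eq_0_iff: "polar F = 0 \<longleftrightarrow> reg F"
  by (auto simp: fls_eq_iff polar_nth reg_def)

lemma polar_eq_self_iff: "polar F = F \<longleftrightarrow> pol F"
  by (auto simp: fls_eq_iff polar_nth pol_def)

lemma polar_diff: "polar (F - G) = polar F - polar G"
  by (auto simp: fls_eq_iff polar_nth)

lemma polar_uminus: "polar (- F) = - polar F"
  by (auto simp: fls_eq_iff polar_nth)

lemma reg_fps_to_fls: "reg F \<Longrightarrow> F = fps_to_fls (fls_regpart F)"
  by (auto simp: fls_eq_iff reg_def)

lemma reg_mult: "reg F \<Longrightarrow> reg G \<Longrightarrow> reg (F * G)"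
  apply (subst reg_fps_to_fls[of F], assumption)
  apply (subst reg_fps_to_fls[of G], assumption)
  by (auto simp: reg_def simp flip: fls_times_fps_to_fls)

lemma reg_mult_nth0: "reg F \<Longrightarrow> reg G \<Longrightarrow> fls_nth (F * G) 0 = fls_nth F 0 * fls_nth G 0"
  apply (subst reg_fps_to_fls[of F], assumption)
  apply (subst reg_fps_to_fls[of G], assumption)
  by (simp flip: fls_times_fps_to_fls)

lemma reg_sum: "(\<And>i. i \<in> A \<Longrightarrow> reg (f i)) \<Longrightarrow> reg (\<Sum>i\<in>A. f i)"
  by (auto simp: reg_def fls_nth_sum intro!: sum.neutral)

lemma pol_sum: "(\<And>i. i \<in> A \<Longrightarrow> pol (f i)) \<Longrightarrow> pol (\<Sum>i\<in>A. f i)"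
  by (auto simp: pol_def fls_nth_sum intro!: sum.neutral)

lemma reg_1 [simp]: "reg 1" by (simp add: reg_def)
lemma p1_1 [simp]: "p1 1" by (simp add: p1_def)
lemma pol_p1: "pol F \<Longrightarrow> p1 F" by (simp add: pol_def p1_def)

lemma neg1_power_fls: "((-1)::complex fls) ^ n = fls_const ((-1) ^ n)"
  by (simp add: fls_const_power)

lemma deriv_unique:
  fixes X Y H :: "'a::field_char_0 fps"
  assumes "fps_deriv X = H * X" "fps_deriv Y = H * Y" "fps_nth X 0 = fps_nth Y 0"
  shows "X = Y"
proof -
  define D where "D = X - Y"
  have dD: "fps_deriv D = H * D" using assms by (simp add: D_def algebra_simps)
  have "fps_nth D n = 0" for n
  proof (induction n rule: less_induct)
    case (less n)
    show ?case
    proof (cases n)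
      case 0 then show ?thesis using assms by (simp add: D_def)
    next
      case (Suc m)
      have "of_nat (Suc m) * fps_nth D (Suc m) = fps_nth (fps_deriv D) m" by simp
      also have "\<dots> = (\<Sum>i=0..m. fps_nth H i * fps_nth D (m - i))" by (simp add: dD fps_mult_nth)
      also have "\<dots> = 0" using less Suc by (intro sum.neutral) auto
      finally show ?thesis using Suc by (simp del: of_nat_Suc)
    qed
  qed
  thus ?thesis by (simp add: D_def fps_eq_iff)
qed

locale birk =
  fixes a L :: "nat \<Rightarrow> complex fls" and s :: complex
  assumes a0: "a 0 = 1"
    and newton: "\<And>k. of_nat (Suc k) * a (Suc k) = (\<Sum>n\<le>k. (-1)^n * L (n+1) * a (k-n))"
    and Lpol: "\<And>n m. n \<ge> 1 \<Longrightarrow> m < -1 \<Longrightarrow> fls_nth (L n) m = 0"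
    and L0: "\<And>n. n \<ge> 1 \<Longrightarrow> fls_nth (L n) 0 = s"
begin

definition "G = Abs_fps a"
definition "H = Abs_fps (\<lambda>n. fls_const ((-1)^n) * L (n+1))"
definition "Hp = Abs_fps (\<lambda>n. fls_const ((-1)^n) * polar (L (n+1)))"
definition "Hr = H - Hp"
definition "Ip = fps_integral Hp 0"
definition "Ir = fps_integral Hr 0"
definition "Phi = fps_exp 1 oo Ir"
definition "N = fps_exp 1 oo Ip"
definition "M = fps_exp 1 oo (- Ip)"

lemma G_deriv: "fps_deriv G = H * G"
proof (rule fps_ext)
  fix k
  have "fps_nth (fps_deriv G) k = of_nat (Suc k) * a (Suc k)" by (simp add: G_def)
  also have "\<dots> = (\<Sum>n\<le>k. (-1)^n * L (n+1) * a (k-n))" by (rule newton)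
  also have "\<dots> = fps_nth (H * G) k"
    by (simp add: fps_mult_nth H_def G_def atLeast0AtMost neg1_power_fls)
  finally show "fps_nth (fps_deriv G) k = fps_nth (H * G) k" .
qed

lemma exp_comp_deriv:
  assumes "fps_nth I 0 = 0"
  shows "fps_deriv (fps_exp (1::complex fls) oo I) = (fps_exp 1 oo I) * fps_deriv I"
  using fps_compose_deriv[OF assms, of "fps_exp 1"] by simp

lemma Phi_deriv: "fps_deriv Phi = Phi * Hr"
  unfolding Phi_def using exp_comp_deriv[of Ir] by (simp add: Ir_def fps_deriv_fps_integral)

lemma N_deriv: "fps_deriv N = N * Hp"
  unfolding N_def using exp_comp_deriv[of Ip] by (simp add: Ip_def fps_deriv_fps_integral)

lemma M_deriv: "fps_deriv M = M * (- Hp)"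
  unfolding M_def using exp_comp_deriv[of "- Ip"] by (simp add: Ip_def fps_deriv_fps_integral)

lemma Phi0: "fps_nth Phi 0 = 1" by (simp add: Phi_def)
lemma N0: "fps_nth N 0 = 1" by (simp add: N_def)
lemma M0: "fps_nth M 0 = 1" by (simp add: M_def)

lemma NM: "N * M = 1"
proof -
  have "fps_deriv (N * M) = 0"
    by (simp add: N_deriv M_deriv algebra_simps)
  hence "N * M = fps_const (fps_nth (N * M) 0)" by (rule fps_deriv_eq_0_iff[THEN iffD1])
  thus ?thesis by (simp add: N0 M0)
qed

lemma PhiN: "Phi * N = G"
proof (rule deriv_unique)
  show "fps_deriv (Phi * N) = H * (Phi * N)"
    by (simp add: Phi_deriv N_deriv Hr_def algebra_simps)
  show "fps_deriv G = H * G" by (rule G_deriv)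
  show "fps_nth (Phi * N) 0 = fps_nth G 0" by (simp add: Phi0 N0 G_def a0)
qed

lemma GM: "G * M = Phi"
proof -
  have "G * M = Phi * (N * M)" by (simp add: PhiN[symmetric] mult.assoc)
  thus ?thesis by (simp add: NM)
qed

lemma GM_nth: "(\<Sum>i=0..k. a i * fps_nth M (k - i)) = fps_nth Phi k"
proof -
  have "fps_nth (G * M) k = fps_nth Phi k" by (simp add: GM)
  thus ?thesis by (simp add: fps_mult_nth G_def)
qed

lemma polar_L:
  assumes "n \<ge> 1" shows "polar (L n) = fls_shift 1 (fls_const (fls_nth (L n) (-1)))"
proof -
  have "fls_nth (polar (L n)) m = fls_nth (fls_shift 1 (fls_const (fls_nth (L n) (-1)))) m" for m
    by (cases "m < -1"; cases "m = -1") (auto simp: polar_nth Lpol[OF assms])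
  thus ?thesis by (simp add: fls_eq_iff)
qed

lemma Hr_reg: "reg (fps_nth Hr j)"
  by (simp add: reg_def Hr_def H_def Hp_def polar_nth)

lemma Hr_nth0: "fls_nth (fps_nth Hr j) 0 = (-1)^j * s"
  by (simp add: Hr_def H_def Hp_def polar_nth L0)

lemma Hp_pol: "p1 F \<Longrightarrow> pol (F * (- fps_nth Hp j))"
proof -
  assume F: "p1 F"
  define c where "c = fls_nth (L (j+1)) (-1)"
  have "F * (- fps_nth Hp j) = - fls_const ((-1)^j) * fls_shift 1 (F * fls_const c)"
    by (simp add: Hp_def polar_L c_def fls_shifted_times_simps mult_ac)
  thus ?thesis using F by (simp add: pol_def p1_def)
qed

lemma Phi_reg: "reg (fps_nth Phi k)"
proof (induction k rule: less_induct)
  case (less k)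
  show ?case
  proof (cases k)
    case 0 then show ?thesis by (simp add: Phi0)
  next
    case (Suc m)
    have "of_nat (Suc m) * fps_nth Phi (Suc m) = fps_nth (fps_deriv Phi) m" by simp
    also have "\<dots> = (\<Sum>i=0..m. fps_nth Phi i * fps_nth Hr (m - i))" by (simp add: Phi_deriv fps_mult_nth)
    finally have eq: "of_nat (Suc m) * fps_nth Phi (Suc m) = (\<Sum>i=0..m. fps_nth Phi i * fps_nth Hr (m - i))" .
    have "reg (\<Sum>i=0..m. fps_nth Phi i * fps_nth Hr (m - i))"
      using less Suc by (intro reg_sum reg_mult Hr_reg) auto
    hence "reg (of_nat (Suc m) * fps_nth Phi (Suc m))" by (simp only: eq)
    thus ?thesis using Suc by (simp add: reg_def del: of_nat_Suc)
  qed
qed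

lemma M_pol: "k \<ge> 1 \<Longrightarrow> pol (fps_nth M k)"
proof (induction k rule: less_induct)
  case (less k)
  then obtain m where Suc: "k = Suc m" by (cases k) auto
  have "of_nat (Suc m) * fps_nth M (Suc m) = fps_nth (fps_deriv M) m" by simp
  also have "\<dots> = (\<Sum>i=0..m. fps_nth M i * fps_nth (- Hp) (m - i))" by (simp add: M_deriv fps_mult_nth sum_negf)
  finally have eq: "of_nat (Suc m) * fps_nth M (Suc m) = (\<Sum>i=0..m. fps_nth M i * (- fps_nth Hp (m - i)))" by (simp add: sum_negf)
  have p1M: "p1 (fps_nth M i)" if "i \<le> m" for i
  proof (cases i)
    case 0 then show ?thesis by (simp add: M0)
  next
    case (Suc i')
    then show ?thesis using less.IH[of i] that \<open>k = Suc m\<close> by (auto intro: pol_p1)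
  qed
  have "pol (\<Sum>i=0..m. fps_nth M i * (- fps_nth Hp (m - i)))"
    by (intro pol_sum Hp_pol p1M) auto
  hence "pol (of_nat (Suc m) * fps_nth M (Suc m))" by (simp only: eq)
  thus ?case using Suc by (simp add: pol_def del: of_nat_Suc)
qed

definition cc :: "nat \<Rightarrow> complex" where "cc k = fls_nth (fps_nth Phi k) 0"

lemma cc0: "cc 0 = 1" by (simp add: cc_def Phi0)

lemma cc_rec: "of_nat (Suc m) * cc (Suc m) = s * (\<Sum>i=0..m. (-1)^(m-i) * cc i)"
proof -
  have "of_nat (Suc m) * fps_nth Phi (Suc m) = fps_nth (fps_deriv Phi) m" by simp
  also have "\<dots> = (\<Sum>i=0..m. fps_nth Phi i * fps_nth Hr (m - i))" by (simp add: Phi_deriv fps_mult_nth)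
  finally have "of_nat (Suc m) * fps_nth Phi (Suc m) = (\<Sum>i=0..m. fps_nth Phi i * fps_nth Hr (m - i))" .
  hence "fls_nth (of_nat (Suc m) * fps_nth Phi (Suc m)) 0 = fls_nth (\<Sum>i=0..m. fps_nth Phi i * fps_nth Hr (m - i)) 0"
    by simp
  also have "\<dots> = (\<Sum>i=0..m. cc i * ((-1)^(m-i) * s))"
    by (simp add: fls_nth_sum reg_mult_nth0 Phi_reg Hr_reg Hr_nth0 cc_def)
  finally show ?thesis
    by (simp add: cc_def sum_distrib_left mult_ac del: of_nat_Suc)
qed

end

declare phi_minus.simps[simp del]

lemma cc_closed:
  fixes cc :: "nat \<Rightarrow> complex" and s :: complex
  assumes c0: "cc 0 = 1"
    and rec: "\<And>m. of_nat (Suc m) * cc (Suc m) = s * (\<Sum>i=0..m. (-1)^(m-i) * cc i)"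
  shows "cc k = (\<Prod>i<k. (s - of_nat i)) / fact k"
proof -
  have step: "of_nat (Suc k) * cc (Suc k) = (s - of_nat k) * cc k" for k
  proof (cases k)
    case 0 then show ?thesis using rec[of 0] by simp
  next
    case (Suc m)
    define S where "S = (\<Sum>i=0..m. (-1)^(m-i) * cc i)"
    have "(\<Sum>i=0..Suc m. (-1)^(Suc m-i) * cc i) = (\<Sum>i=0..m. (-1)^(Suc m-i) * cc i) + cc (Suc m)"
      by simp
    also have "(\<Sum>i=0..m. (-1)^(Suc m-i) * cc i) = (\<Sum>i=0..m. - ((-1)^(m-i) * cc i))"
      by (intro sum.cong refl) (simp add: Suc_diff_le)
    also have "\<dots> = - S" by (simp add: S_def sum_negf)
    finally have A: "(\<Sum>i=0..Suc m. (-1)^(Suc m-i) * cc i) = cc (Suc m) - S" by simp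
    have "of_nat (Suc (Suc m)) * cc (Suc (Suc m)) = s * (cc (Suc m) - S)"
      using rec[of "Suc m"] unfolding A .
    also have "s * S = of_nat (Suc m) * cc (Suc m)" using rec[of m] by (simp add: S_def)
    hence "s * (cc (Suc m) - S) = (s - of_nat (Suc m)) * cc (Suc m)" by (simp add: algebra_simps)
    finally show ?thesis using Suc by simp
  qed
  show ?thesis
  proof (induction k)
    case 0 then show ?case by (simp add: c0)
  next
    case (Suc k)
    have "cc (Suc k) = (s - of_nat k) * cc k / of_nat (Suc k)"
      using step[of k] by (simp add: field_simps del: of_nat_Suc)
    also have "\<dots> = (\<Prod>i<Suc k. (s - of_nat i)) / fact (Suc k)"
      by (simp add: Suc.IH field_simps del: of_nat_Suc)
    finally show ?case .
  qed
qed

lemma exp_has_laurent: "(\<lambda>z. exp (c * z)) has_laurent_expansion fps_to_fls (fps_exp (c::complex))"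
  using has_fps_expansion_exp[of c] by (simp add: has_fps_expansion_to_laurent)

context
  fixes \<delta> :: nat and t :: real
  assumes \<delta>: "\<delta> \<ge> 1"
begin

definition "qq = fps_to_fls (fps_exp (of_nat \<delta> :: complex))"
definition "uu = fps_to_fls (fps_exp (of_real t * of_nat \<delta> :: complex))"

lemma qq_power: "qq ^ m = fps_to_fls (fps_exp (of_nat m * of_nat \<delta>))"
  by (simp add: qq_def fps_exp_power_mult flip: fps_to_fls_power)

lemma uu_power: "uu ^ m = fps_to_fls (fps_exp (of_nat m * (of_real t * of_nat \<delta>)))"
  by (simp add: uu_def fps_exp_power_mult flip: fps_to_fls_power)

lemma newton_qq: "newton qq"
proof
  fix m :: nat assume m: "m \<ge> 1"
  show "qq ^ m \<noteq> 1"
  proof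
    assume "qq ^ m = 1"
    hence "fps_exp (of_nat m * of_nat \<delta> :: complex) = 1" by (simp add: qq_power)
    hence "fps_nth (fps_exp (of_nat m * of_nat \<delta> :: complex)) 1 = 0" by simp
    thus False using m \<delta> by simp
  qed
qed

interpretation N: newton qq uu by (rule newton_qq)

lemma phi_eq: "phi t (replicate k \<delta>) = N.a k"
proof -
  define g :: "complex \<Rightarrow> complex" where "g = (\<lambda>z. \<Prod>j\<in>{1..k}. exp (of_real t * of_nat \<delta> * z) * exp (of_nat \<delta> * z) ^ j / (1 - exp (of_nat \<delta> * z) ^ j))"
  have "g has_laurent_expansion N.a k"
    unfolding g_def N.a_def unfolding uu_def qq_def
    by (intro laurent_expansion_intros exp_has_laurent)
  hence H: "is_laurent_exp (N.a k) (phi_fun t (replicate k \<delta>))"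
    by (rule is_laurent_exp_from_expansion) (unfold g_def, rule phi_fun_closed[OF _ \<delta>])
  show ?thesis unfolding phi_def
  proof (rule the_equality)
    show "is_laurent_exp (N.a k) (phi_fun t (replicate k \<delta>))" by (rule H)
    fix F assume "is_laurent_exp F (phi_fun t (replicate k \<delta>))"
    thus "F = N.a k" using H by (rule is_laurent_exp_unique)
  qed
qed

definition "s0 = - (complex_of_real t + 1/2)"

lemma L_eq: "N.L n = fps_to_fls (fps_exp (of_nat n * (of_real t * of_nat \<delta>) + of_nat n * of_nat \<delta>))
     / fps_to_fls (1 - fps_exp (of_nat n * of_nat \<delta>))"
  unfolding N.L_def qq_power uu_power by (simp add: fps_exp_add_mult flip: fls_times_fps_to_fls)

lemma birk_inst: "birk N.a N.L s0"
proof
  show "N.a 0 = 1" by simp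
  show "of_nat (Suc k) * N.a (Suc k) = (\<Sum>n\<le>k. (-1)^n * N.L (n+1) * N.a (k-n))" for k
    by (rule N.newton)
  fix n :: nat assume n: "n \<ge> 1"
  have c: "(of_nat n * of_nat \<delta> :: complex) \<noteq> 0" using n \<delta> by simp
  show "fls_nth (N.L n) m = 0" if "m < -1" for m
    unfolding L_eq using Lcoeff(1)[OF c that] .
  have "fls_nth (N.L n) 0 = 1/2 - (of_nat n * (of_real t * of_nat \<delta>) + of_nat n * of_nat \<delta>) / (of_nat n * of_nat \<delta>)"
    unfolding L_eq by (rule Lcoeff(2)[OF c])
  also have "\<dots> = s0" using c by (simp add: s0_def field_simps)
  finally show "fls_nth (N.L n) 0 = s0" .
qed

interpretation Bk: birk N.a N.L s0 by (rule birk_inst)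

lemma phi_minus_eq: "k \<ge> 1 \<Longrightarrow> phi_minus t (replicate k \<delta>) = fps_nth Bk.M k
    \<and> E_series t (replicate k \<delta>) = fps_nth Bk.Phi k - fps_nth Bk.M k"
proof (induction k rule: less_induct)
  case (less k)
  have E: "E_series t (replicate k \<delta>) = N.a k + (\<Sum>i\<in>{1..<k}. N.a i * fps_nth Bk.M (k - i))"
    unfolding E_series_def length_replicate phi_eq
  proof (intro arg_cong2[where f="(+)"] refl sum.cong)
    fix i assume i: "i \<in> {1..<k}"
    hence "k - i < k" "k - i \<ge> 1" by auto
    hence "phi_minus t (replicate (k - i) \<delta>) = fps_nth Bk.M (k - i)" using less.IH by blast
    thus "phi t (take i (replicate k \<delta>)) * phi_minus t (drop i (replicate k \<delta>)) = N.a i * fps_nth Bk.M (k - i)"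
      using i by (simp add: phi_eq min_def)
  qed
  have "fps_nth Bk.Phi k = (\<Sum>i=0..k. N.a i * fps_nth Bk.M (k - i))"
    by (rule Bk.GM_nth[symmetric])
  also have "\<dots> = N.a 0 * fps_nth Bk.M k + (\<Sum>i=Suc 0..k. N.a i * fps_nth Bk.M (k - i))"
    by (simp add: sum.atLeast_Suc_atMost)
  also have "(\<Sum>i=Suc 0..k. N.a i * fps_nth Bk.M (k - i)) = (\<Sum>i\<in>{1..<k}. N.a i * fps_nth Bk.M (k - i)) + N.a k * fps_nth Bk.M 0"
  proof -
    have "{Suc 0..k} = {1..<Suc k}" by auto
    thus ?thesis using less.prems by (simp add: sum.atLeastLessThan_Suc)
  qed
  finally have E2: "E_series t (replicate k \<delta>) = fps_nth Bk.Phi k - fps_nth Bk.M k"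
    unfolding E by (simp add: Bk.M0)
  have "phi_minus t (replicate k \<delta>) = - polar (E_series t (replicate k \<delta>))"
    using less.prems by (subst phi_minus.simps) (simp add: E_series_def)
  also have "\<dots> = fps_nth Bk.M k"
    using Bk.Phi_reg[of k] Bk.M_pol[OF less.prems]
    by (simp add: E2 polar_diff polar_eq_0_iff[symmetric] polar_eq_self_iff[symmetric])
  finally show ?case using E2 by simp
qed

lemma M0k_eq: "k \<ge> 1 \<Longrightarrow> M0k \<delta> k t = Bk.cc k"
proof -
  assume k: "k \<ge> 1"
  have "phi_plus t (replicate k \<delta>) = fps_nth Bk.Phi k"
    using phi_minus_eq[OF k] Bk.Phi_reg[of k] Bk.M_pol[OF k]
    by (simp add: phi_plus_def polar_diff polar_eq_0_iff[symmetric] polar_eq_self_iff[symmetric])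
  thus ?thesis by (simp add: M0k_def Zren_def Bk.cc_def)
qed

lemma cc_formula: "Bk.cc k = (\<Prod>i<k. (s0 - of_nat i)) / fact k"
  by (rule cc_closed[OF Bk.cc0 Bk.cc_rec])

lemma M0k_closed: "k \<ge> 1 \<Longrightarrow> M0k \<delta> k t = (\<Prod>i<k. (- (complex_of_real t + 1/2) - of_nat i)) / fact k"
  using M0k_eq cc_formula by (simp add: s0_def)

end

lemma prod_shift_formula:
  "(\<Prod>i<k. (- (complex_of_real t + 1/2) - of_nat i)) = (-1)^k * (\<Prod>i\<in>{1..k}. complex_of_real (t + real i - 1/2))"
proof (induction k)
  case 0 then show ?case by simp
next
  case (Suc k)
  have "(\<Prod>i<Suc k. (- (complex_of_real t + 1/2) - of_nat i))
      = (- (complex_of_real t + 1/2) - of_nat k) * (\<Prod>i<k. (- (complex_of_real t + 1/2) - of_nat i))"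
    by simp
  also have "- (complex_of_real t + 1/2) - of_nat k = - complex_of_real (t + real (Suc k) - 1/2)"
    by simp
  finally show ?case using Suc.IH by (simp add: prod.nat_ivl_Suc' algebra_simps)
qed

theorem lemma5p9:
  fixes k \<delta> :: nat and t :: real
  assumes "k \<ge> 1" and "\<delta> \<ge> 1" and "t \<ge> 0"
  shows "M0k \<delta> k t = (\<Prod>i<k. (M0k \<delta> 1 t - of_nat i)) / of_nat (fact k)
       \<and> M0k \<delta> k t = ((-1) ^ k / of_nat (fact k)) *
            (\<Prod>i\<in>{1..k}. complex_of_real (t + real i - 1/2))"
proof
  have K: "M0k \<delta> k t = (\<Prod>i<k. (- (complex_of_real t + 1/2) - of_nat i)) / fact k"
    using M0k_closed[OF assms(2) assms(1)] .
  have one: "M0k \<delta> 1 t = - (complex_of_real t + 1/2)"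
    using M0k_closed[OF assms(2), of 1] by simp
  show "M0k \<delta> k t = (\<Prod>i<k. (M0k \<delta> 1 t - of_nat i)) / of_nat (fact k)"
    unfolding one by (simp add: K)
  show "M0k \<delta> k t = ((-1) ^ k / of_nat (fact k)) * (\<Prod>i\<in>{1..k}. complex_of_real (t + real i - 1/2))"
    unfolding K prod_shift_formula by simp
qed

end
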